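(* Let $n\ge 0$. Every cycle $C$ in the (unweighted) diamond graph $D_n$ is a principal cycle of some subdiamond of $D_n$. Moreover, every principal cycle of a subdiamond of height $2^t$ has length $2^{t+1}$.
   Context: Diamond graphs: $D_0$ consists of two vertices joined by an edge of length $1$; $D_n$ is obtained from $D_{n-1}$ by replacing every edge $uv$ by a quadrilateral $u,a,v,b$ with edges $ua,av,vb,bu$; all edges have length $1$ and $D_n$ carries its shortest-path metric. Call one vertex of $D_0$ the top and the other the bottom; the top (bottom) of $D_n$ is the vertex that evolved from the top (bottom) of $D_0$. A subdiamond of $D_n$ is a subgraph which evolved (through the successive replacements) from a single edge of some $D_k$, $0\le k\le n$. The top (bottom) of a subdiamond $S$ is its vertex closest to the top (bottom) of $D_n$; the height of $S$ is the distance between its top and bottom. When a subdiamond $S$ evolves from an edge $uv$, the first replacement step produces a quadrilateral $u,a,v,b$; the vertex of $S$ corresponding to $a$ is called the leftmost vertex and the one corresponding to $b$ the rightmost vertex of $S$. A principal cycle of $S$ is a cycle consisting of a path in $S$ from the top to the bottom of $S$ passing through the leftmost vertex together with a path in $S$ from the bottom to the top passing through the rightmost vertex. *)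

theory Defs
  imports Main
begin

text \<open>An edge of D_n is named by a word of length n
over the four letters below; the head of the word is the MOST RECENT replacement step.
Replacing the edge uv (u = top endpoint, v = bottom endpoint) by the quadrilateral
u,a,v,b produces the edges ua (UA), av (AV), ub (UB), bv (BV).  The new vertex a created
from the edge named w is  Mid w Lft  (leftmost vertex), b is  Mid w Rgt  (rightmost).\<close>

datatype quad = UA | AV | UB | BV
datatype side = Lft | Rgt
datatype dvert = Top | Bot | Mid "quad list" side

fun ends :: "quad list \<Rightarrow> dvert \<times> dvert" where
  "ends [] = (Top, Bot)"
| "ends (c # w) = (let (u, v) = ends w in
     (case c of UA \<Rightarrow> (u, Mid w Lft)
              | AV \<Rightarrow> (Mid w Lft, v)
              | UB \<Rightarrow> (u, Mid w Rgt)
              | BV \<Rightarrow> (Mid w Rgt, v)))"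

definition dedge :: "quad list \<Rightarrow> dvert set" where
  "dedge w = {fst (ends w), snd (ends w)}"

definition D_edges :: "nat \<Rightarrow> dvert set set" where
  "D_edges n = {dedge w | w. length w = n}"

text \<open>Subdiamonds of D_n: the subdiamond evolved from the edge w of D_k (k = length w \<le> n).\<close>
definition subdiamond :: "nat \<Rightarrow> quad list \<Rightarrow> bool" where
  "subdiamond n w \<longleftrightarrow> length w \<le> n"

definition sd_edges :: "nat \<Rightarrow> quad list \<Rightarrow> dvert set set" where
  "sd_edges n w = {dedge (u @ w) | u. length (u @ w) = n}"

definition sd_top :: "quad list \<Rightarrow> dvert" where
  "sd_top w = fst (ends w)"

definition sd_bot :: "quad list \<Rightarrow> dvert" where
  "sd_bot w = snd (ends w)"

definition sd_leftmost :: "quad list \<Rightarrow> dvert" where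
  "sd_leftmost w = Mid w Lft"

definition sd_rightmost :: "quad list \<Rightarrow> dvert" where
  "sd_rightmost w = Mid w Rgt"

definition is_walk :: "'a set set \<Rightarrow> 'a list \<Rightarrow> bool" where
  "is_walk E xs \<longleftrightarrow> xs \<noteq> [] \<and> (\<forall>i. Suc i < length xs \<longrightarrow> {xs ! i, xs ! Suc i} \<in> E)"

definition is_path :: "'a set set \<Rightarrow> 'a list \<Rightarrow> bool" where
  "is_path E xs \<longleftrightarrow> is_walk E xs \<and> distinct xs"

definition path_edges :: "'a list \<Rightarrow> 'a set set" where
  "path_edges xs = {{xs ! i, xs ! Suc i} | i. Suc i < length xs}"

definition is_cycle :: "'a set set \<Rightarrow> 'a list \<Rightarrow> bool" where
  "is_cycle E xs \<longleftrightarrow> length xs \<ge> 3 \<and> is_path E xs \<and> {last xs, hd xs} \<in> E"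

definition cyc_edges :: "'a list \<Rightarrow> 'a set set" where
  "cyc_edges xs = path_edges xs \<union> {{last xs, hd xs}}"

definition gdist :: "'a set set \<Rightarrow> 'a \<Rightarrow> 'a \<Rightarrow> nat" where
  "gdist E u v = (LEAST m. \<exists>xs. is_walk E xs \<and> hd xs = u \<and> last xs = v \<and> length xs = Suc m)"

definition height :: "nat \<Rightarrow> quad list \<Rightarrow> nat" where
  "height n w = gdist (D_edges n) (sd_top w) (sd_bot w)"

definition principal_cycle :: "nat \<Rightarrow> quad list \<Rightarrow> dvert set set \<Rightarrow> bool" where
  "principal_cycle n w C \<longleftrightarrow> subdiamond n w \<and>
     (\<exists>xs. is_cycle (D_edges n) xs \<and> C = cyc_edges xs) \<and>
     (\<exists>p1 p2. is_path (sd_edges n w) p1 \<and> hd p1 = sd_top w \<and> last p1 = sd_bot w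
              \<and> sd_leftmost w \<in> set p1
              \<and> is_path (sd_edges n w) p2 \<and> hd p2 = sd_bot w \<and> last p2 = sd_top w
              \<and> sd_rightmost w \<in> set p2
              \<and> C = path_edges p1 \<union> path_edges p2)"

end

theory Submission
  imports Defs Complex_Main
begin

fun vin :: "nat \<Rightarrow> dvert \<Rightarrow> bool" where
  "vin n Top = True" | "vin n Bot = True" | "vin n (Mid u s) = (length u < n)"

fun sideof :: "quad \<Rightarrow> side" where
  "sideof UA = Lft" | "sideof AV = Lft" | "sideof UB = Rgt" | "sideof BV = Rgt"

lemma ends_Cons: "ends (c # w) = (case c of UA \<Rightarrow> (fst (ends w), Mid w Lft)
   | AV \<Rightarrow> (Mid w Lft, snd (ends w)) | UB \<Rightarrow> (fst (ends w), Mid w Rgt) | BV \<Rightarrow> (Mid w Rgt, snd (ends w)))"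
  by (cases "ends w") (simp split: quad.split)

declare ends.simps(2)[simp del]

lemma vin_mono: "vin n x \<Longrightarrow> n \<le> m \<Longrightarrow> vin m x"
  by (cases x) auto

lemma ends_vin: "vin (length w) (fst (ends w)) \<and> vin (length w) (snd (ends w))"
proof (induction w)
  case Nil then show ?case by simp
next
  case (Cons c w) then show ?case
    by (cases c) (auto simp: ends_Cons intro: vin_mono)
qed

lemma dedge_vin: "x \<in> dedge w \<Longrightarrow> vin (length w) x"
  using ends_vin[of w] by (auto simp: dedge_def)

lemma ends_not_mid[simp]: "fst (ends w) \<noteq> Mid w s" "snd (ends w) \<noteq> Mid w s"
   "Mid w s \<noteq> fst (ends w)" "Mid w s \<noteq> snd (ends w)"
  using ends_vin[of w] by (metis less_irrefl vin.simps(3))+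

lemma dedge_not_mid: "x \<in> dedge w \<Longrightarrow> x \<noteq> Mid w s"
  using ends_not_mid by (auto simp: dedge_def)

lemma ends_distinct: "fst (ends w) \<noteq> snd (ends w)"
proof (cases w)
  case Nil then show ?thesis by simp
next
  case (Cons c v) then show ?thesis using ends_not_mid[of v]
    by (cases c) (auto simp: ends_Cons)
qed

lemma dedge_Cons: "dedge (c # w) = {(if c \<in> {UA,UB} then fst (ends w) else snd (ends w)), Mid w (sideof c)}"
  by (cases c) (auto simp: dedge_def ends_Cons)

lemma dedge_inj: "length w = length w' \<Longrightarrow> dedge w = dedge w' \<Longrightarrow> w = w'"
proof (induction w arbitrary: w')
  case Nil then show ?case by simp
next
  case (Cons c w)
  then obtain c' v where w': "w' = c' # v" and len: "length v = length w" by (cases w') auto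
  have m0: "Mid w (sideof c) \<in> dedge (c # w)" by (simp add: dedge_Cons)
  have m: "Mid w (sideof c) \<in> dedge (c' # v)" using Cons.prems(2) w' m0 by simp
  have nv: "\<not> vin (length v) (Mid w s)" for s using len by simp
  have "Mid w (sideof c) \<noteq> fst (ends v)" "Mid w (sideof c) \<noteq> snd (ends v)"
    using ends_vin[of v] nv by metis+
  then have "Mid w (sideof c) = Mid v (sideof c')"
    using m unfolding dedge_Cons by (simp split: if_splits)
  then have wv: "w = v" and sc: "sideof c = sideof c'" by auto
  have "dedge (c # w) = dedge (c' # w)" using Cons.prems w' wv by simp
  then have "c = c'" using ends_distinct[of w] ends_vin[of w] sc
    by (cases c; cases c') (auto simp: dedge_Cons doubleton_eq_iff)
  then show ?case using w' wv by simp
qed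

lemma D_edges_iff: "e \<in> D_edges n \<longleftrightarrow> (\<exists>w. length w = n \<and> e = dedge w)"
  by (auto simp: D_edges_def)

lemma dedge_two: "x \<in> dedge w \<Longrightarrow> y \<in> dedge w \<Longrightarrow> x \<noteq> y \<Longrightarrow> dedge w = {x, y}"
  by (auto simp: dedge_def)

lemma new_nb:
  assumes "{x, y} \<in> D_edges (Suc n)" "\<not> vin n y"
  shows "\<exists>w s. y = Mid w s \<and> length w = n \<and> x \<in> dedge w"
proof -
  obtain v where v: "length v = Suc n" "{x, y} = dedge v" using assms(1) by (auto simp: D_edges_iff)
  then obtain c w where cw: "v = c # w" "length w = n" by (cases v) auto
  let ?u = "if c \<in> {UA,UB} then fst (ends w) else snd (ends w)"
  have uv: "vin n ?u" using ends_vin[of w] cw by auto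
  have e: "{x, y} = {?u, Mid w (sideof c)}" using v cw by (simp add: dedge_Cons)
  have "y \<noteq> ?u" using uv assms(2) by metis
  then have y: "y = Mid w (sideof c)" using e by (auto simp: doubleton_eq_iff)
  have "?u \<noteq> Mid w (sideof c)" by simp
  then have "x = ?u" using e y by (auto simp: doubleton_eq_iff)
  moreover have "?u \<in> dedge w" by (simp add: dedge_def)
  ultimately show ?thesis using y cw by blast
qed

lemma edge_vin:
  assumes "{x, y} \<in> D_edges (Suc n)"
  shows "vin n x \<longleftrightarrow> \<not> vin n y"
proof -
  obtain v where v: "length v = Suc n" "{x, y} = dedge v" using assms(1) by (auto simp: D_edges_iff)
  then obtain c w where cw: "v = c # w" "length w = n" by (cases v) auto
  let ?u = "if c \<in> {UA,UB} then fst (ends w) else snd (ends w)"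
  have uv: "vin n ?u" using ends_vin[of w] cw by auto
  have nm: "\<not> vin n (Mid w (sideof c))" using cw by simp
  have e: "{x, y} = {?u, Mid w (sideof c)}" using v cw by (simp add: dedge_Cons)
  then have "(x = ?u \<and> y = Mid w (sideof c)) \<or> (y = ?u \<and> x = Mid w (sideof c))"
    by (auto simp: doubleton_eq_iff)
  then show ?thesis using uv nm by auto
qed

lemma edge_of: "x \<in> dedge w \<Longrightarrow> \<exists>c. sideof c = s \<and> dedge (c # w) = {x, Mid w s}"
  apply (cases s)
   apply (auto simp: dedge_def)
     apply (rule exI[of _ UA]; simp add: dedge_def ends_Cons)
    apply (rule exI[of _ AV]; simp add: dedge_def ends_Cons insert_commute)
   apply (rule exI[of _ UB]; simp add: dedge_def ends_Cons)
  apply (rule exI[of _ BV]; simp add: dedge_def ends_Cons insert_commute)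
  done

definition Qe :: "quad list \<Rightarrow> side \<Rightarrow> dvert set set" where
  "Qe w s = (\<lambda>x. {x, Mid w s}) ` dedge w"

lemma Qe_sub: "e \<in> Qe w s \<Longrightarrow> \<exists>c. sideof c = s \<and> e = dedge (c # w)"
  unfolding Qe_def using edge_of by fastforce

lemma path_edges_Nil[simp]: "path_edges [] = {}" by (simp add: path_edges_def)
lemma path_edges_single[simp]: "path_edges [x] = {}" by (simp add: path_edges_def)

lemma path_edges_Cons2: "path_edges (x # y # r) = insert {x, y} (path_edges (y # r))"
proof -
  have "path_edges (x # y # r) = {{(x # y # r) ! i, (x # y # r) ! Suc i} | i. Suc i < Suc (length (y # r))}"
    by (simp add: path_edges_def)
  also have "\<dots> = insert {x,y} {{(y # r) ! i, (y # r) ! Suc i} | i. Suc i < length (y # r)}"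
    apply (rule set_eqI)
    apply (rule iffI)
     apply (clarsimp)
     apply (case_tac i; force)
    apply (auto)
     apply (rule exI[of _ 0]; simp)
    apply (rule_tac x="Suc i" in exI; simp)
    done
  finally show ?thesis by (simp add: path_edges_def)
qed

lemma walk_eq: "is_walk E xs \<longleftrightarrow> xs \<noteq> [] \<and> path_edges xs \<subseteq> E"
  by (auto simp: is_walk_def path_edges_def)

lemma path_edges_subset_set: "e \<in> path_edges xs \<Longrightarrow> e \<subseteq> set xs"
  by (auto simp: path_edges_def)

lemma path_edges_snoc: "xs \<noteq> [] \<Longrightarrow> path_edges (xs @ [y]) = insert {last xs, y} (path_edges xs)"
proof (induction xs)
  case Nil then show ?case by simp
next
  case (Cons x xs) then show ?case
    by (cases xs) (auto simp: path_edges_Cons2)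
qed

lemma cyc_edges_eq: "xs \<noteq> [] \<Longrightarrow> cyc_edges xs = path_edges (xs @ [hd xs])"
  by (simp add: cyc_edges_def path_edges_snoc)

lemma cycle_eq: "is_cycle E xs \<longleftrightarrow> 3 \<le> length xs \<and> distinct xs \<and> cyc_edges xs \<subseteq> E"
  by (auto simp: is_cycle_def is_path_def walk_eq cyc_edges_def)

lemma finite_path_edges: "finite (path_edges xs)"
  unfolding path_edges_def
  by (rule finite_image_set, rule finite_subset[of _ "{..<length xs}"]) auto

lemma card_path_edges: "distinct xs \<Longrightarrow> card (path_edges xs) = length xs - 1"
proof (induction xs)
  case Nil then show ?case by simp
next
  case (Cons x xs) then show ?case
  proof (cases xs)
    case Nil then show ?thesis by simp
  next
    case (Cons y r)
    have "{x, y} \<notin> path_edges xs" using Cons.prems \<open>xs = y # r\<close> path_edges_subset_set by fastforce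
    moreover have "finite (path_edges xs)" by (rule finite_path_edges)
    ultimately show ?thesis using Cons.IH Cons.prems \<open>xs = y # r\<close> by (simp add: path_edges_Cons2)
  qed
qed

lemma path_edges_rev: "path_edges (rev xs) = path_edges xs"
proof (induction xs)
  case Nil then show ?case by simp
next
  case (Cons x xs) then show ?case
  proof (cases xs)
    case Nil then show ?thesis by simp
  next
    case (Cons y r)
    have "path_edges (rev (x # xs)) = path_edges (rev xs @ [x])" by simp
    also have "\<dots> = insert {last (rev xs), x} (path_edges (rev xs))"
      using Cons by (intro path_edges_snoc) simp
    also have "\<dots> = insert {y, x} (path_edges xs)" using Cons Cons.IH by (simp add: last_rev)
    also have "\<dots> = path_edges (x # xs)" using Cons by (simp add: path_edges_Cons2 insert_commute)
    finally show ?thesis .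
  qed
qed

lemma path_edges_map_upt: "path_edges (map f [0..<Suc m]) = {{f i, f (Suc i)} | i. i < m}"
proof (rule set_eqI, rule iffI)
  fix e assume "e \<in> path_edges (map f [0..<Suc m])"
  then obtain i where "Suc i < Suc m" "e = {map f [0..<Suc m] ! i, map f [0..<Suc m] ! Suc i}"
    by (auto simp: path_edges_def simp del: upt_Suc)
  then show "e \<in> {{f i, f (Suc i)} | i. i < m}" by (auto simp del: upt_Suc)
next
  fix e assume "e \<in> {{f i, f (Suc i)} | i. i < m}"
  then obtain i where i: "i < m" "e = {f i, f (Suc i)}" by auto
  then have "e = {map f [0..<Suc m] ! i, map f [0..<Suc m] ! Suc i}" by (simp del: upt_Suc)
  then show "e \<in> path_edges (map f [0..<Suc m])" using i unfolding path_edges_def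
    by (intro CollectI exI[of _ i]) (simp del: upt_Suc)
qed

lemma walk_edge: "is_walk E p \<Longrightarrow> Suc i < length p \<Longrightarrow> {p ! i, p ! Suc i} \<in> E"
  by (simp add: is_walk_def)

lemma alt:
  assumes "is_walk (D_edges (Suc n)) p" "vin n (hd p)"
  shows "i < length p \<Longrightarrow> vin n (p ! i) \<longleftrightarrow> even i"
proof (induction i)
  case 0 then show ?case using assms by (cases p) auto
next
  case (Suc i)
  have "{p ! i, p ! Suc i} \<in> D_edges (Suc n)" using walk_edge[OF assms(1) Suc.prems] .
  then have "vin n (p ! i) \<longleftrightarrow> \<not> vin n (p ! Suc i)" by (rule edge_vin)
  then show ?case using Suc by auto
qed

lemma mid:
  assumes "is_walk (D_edges (Suc n)) p" "vin n (hd p)" "odd i" "Suc i < length p"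
  shows "\<exists>w s. p ! i = Mid w s \<and> length w = n \<and> p ! (i - 1) \<in> dedge w \<and> p ! Suc i \<in> dedge w"
proof -
  have nv: "\<not> vin n (p ! i)" using alt[OF assms(1,2)] assms(3,4) by simp
  obtain j where j: "i = Suc j" using assms(3) by (cases i) auto
  have e1: "{p ! j, p ! i} \<in> D_edges (Suc n)" using walk_edge[OF assms(1), of j] j assms(4) by simp
  have e2: "{p ! Suc i, p ! i} \<in> D_edges (Suc n)" using walk_edge[OF assms(1), of i] assms(4)
    by (simp add: insert_commute)
  obtain w s where ws: "p ! i = Mid w s" "length w = n" "p ! j \<in> dedge w" using new_nb[OF e1 nv] by blast
  obtain w' s' where ws': "p ! i = Mid w' s'" "length w' = n" "p ! Suc i \<in> dedge w'" using new_nb[OF e2 nv] by blast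
  show ?thesis using ws ws' j by auto
qed

fun mword :: "dvert \<Rightarrow> quad list" where
  "mword (Mid w s) = w" | "mword _ = []"
fun mside :: "dvert \<Rightarrow> side" where
  "mside (Mid w s) = s" | "mside _ = Lft"

lemma proj:
  assumes "is_walk (D_edges (Suc n)) p" "vin n (hd p)" "vin n (last p)"
  shows "\<exists>m W S. length p = 2*m+1 \<and> (\<forall>i<m. p ! (2*i+1) = Mid (W i) (S i) \<and> length (W i) = n
            \<and> p ! (2*i) \<in> dedge (W i) \<and> p ! (2*i+2) \<in> dedge (W i))"
proof -
  have ne: "p \<noteq> []" using assms(1) by (simp add: is_walk_def)
  then have "last p = p ! (length p - 1)" by (simp add: last_conv_nth)
  then have "even (length p - 1)" using alt[OF assms(1,2), of "length p - 1"] assms(3) ne by simp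
  moreover have "length p > 0" using ne by simp
  ultimately have m: "length p = 2*((length p - 1) div 2)+1" by presburger
  define m where "m = (length p - 1) div 2"
  note m = m[folded m_def]
  define W where "W i = mword (p ! (2*i+1))" for i
  define S where "S i = mside (p ! (2*i+1))" for i
  have "\<forall>i<m. p ! (2*i+1) = Mid (W i) (S i) \<and> length (W i) = n
            \<and> p ! (2*i) \<in> dedge (W i) \<and> p ! (2*i+2) \<in> dedge (W i)"
  proof (intro allI impI)
    fix i assume i: "i < m"
    obtain w s where "p ! (2*i+1) = Mid w s \<and> length w = n \<and> p ! (2*i+1 - 1) \<in> dedge w \<and> p ! Suc (2*i+1) \<in> dedge w"
      using mid[OF assms(1,2), of "2*i+1"] i m by auto
    then show "p ! (2*i+1) = Mid (W i) (S i) \<and> length (W i) = n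
            \<and> p ! (2*i) \<in> dedge (W i) \<and> p ! (2*i+2) \<in> dedge (W i)"
      by (simp add: W_def S_def)
  qed
  then show ?thesis using m by blast
qed

lemma path_edgesI: "Suc j < length p \<Longrightarrow> {p ! j, p ! Suc j} \<in> path_edges p"
  unfolding path_edges_def by blast

lemma pe_split:
  assumes "length p = 2*m+1"
    and "\<And>i. i < m \<Longrightarrow> p ! (2*i+1) = Mid (W i) (S i) \<and> dedge (W i) = {p ! (2*i), p ! (2*i+2)}"
  shows "path_edges p = (\<Union>i<m. Qe (W i) (S i))"
proof (rule set_eqI, rule iffI)
  fix e assume "e \<in> path_edges p"
  then obtain j where j: "Suc j < length p" "e = {p ! j, p ! Suc j}" by (auto simp: path_edges_def)
  show "e \<in> (\<Union>i<m. Qe (W i) (S i))"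
  proof (cases "even j")
    case True
    then obtain i where i: "j = 2*i" by blast
    then have im: "i < m" using j assms(1) by simp
    have "e = {p ! (2*i), Mid (W i) (S i)}" using j i assms(2)[OF im] by simp
    moreover have "p ! (2*i) \<in> dedge (W i)" using assms(2)[OF im] by simp
    ultimately show ?thesis using im unfolding Qe_def by blast
  next
    case False
    then obtain i where i: "j = 2*i+1" by (metis oddE)
    then have im: "i < m" using j assms(1) by simp
    have "e = {p ! (2*i+2), Mid (W i) (S i)}" using j i assms(2)[OF im] by (simp add: insert_commute)
    moreover have "p ! (2*i+2) \<in> dedge (W i)" using assms(2)[OF im] by simp
    ultimately show ?thesis using im unfolding Qe_def by blast
  qed
next
  fix e assume "e \<in> (\<Union>i<m. Qe (W i) (S i))"
  then obtain i x where i: "i < m" "x \<in> dedge (W i)" "e = {x, Mid (W i) (S i)}" unfolding Qe_def by blast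
  have h: "p ! (2*i+1) = Mid (W i) (S i)" "dedge (W i) = {p ! (2*i), p ! (2*i+2)}" using assms(2)[OF i(1)] by auto
  show "e \<in> path_edges p"
  proof (cases "x = p ! (2*i)")
    case True
    then have "e = {p ! (2*i), p ! Suc (2*i)}" using i h by simp
    moreover have "Suc (2*i) < length p" using i assms(1) by simp
    ultimately show ?thesis by (metis path_edgesI)
  next
    case False
    then have "x = p ! (2*i+2)" using i h by auto
    then have "e = {p ! (2*i+1), p ! Suc (2*i+1)}" using i h by (simp add: insert_commute)
    moreover have "Suc (2*i+1) < length p" using i assms(1) by simp
    ultimately show ?thesis by (metis path_edgesI)
  qed
qed

definition halfE :: "nat \<Rightarrow> quad list \<Rightarrow> side \<Rightarrow> dvert set set" where
  "halfE n w s = {dedge (u @ c # w) | u c. length (u @ c # w) = n \<and> sideof c = s}"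

lemma sd_base: "length w = n \<Longrightarrow> sd_edges n w = {dedge w}"
  by (auto simp: sd_edges_def)

lemma sd_sub: "sd_edges n w \<subseteq> D_edges n"
  by (auto simp: sd_edges_def D_edges_def)

lemma sd_step:
  assumes "dedge (c # v) \<in> sd_edges (Suc n) w" "length v = n" "length w \<le> n"
  shows "dedge v \<in> sd_edges n w"
proof -
  obtain u where u: "dedge (c # v) = dedge (u @ w)" "length (u @ w) = Suc n"
    using assms(1) by (auto simp: sd_edges_def)
  then have "c # v = u @ w" using assms(2) by (intro dedge_inj) auto
  moreover obtain c' u' where "u = c' # u'" using u(2) assms(3) by (cases u) auto
  ultimately have "v = u' @ w" by simp
  then show ?thesis using assms(2) unfolding sd_edges_def by blast
qed

lemma half_step:
  assumes "dedge v \<in> halfE n w s" "length v = n"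
  shows "dedge (c # v) \<in> halfE (Suc n) w s"
proof -
  obtain u c' where u: "dedge v = dedge (u @ c' # w)" "length (u @ c' # w) = n" "sideof c' = s"
    using assms(1) by (auto simp: halfE_def)
  then have "v = u @ c' # w" using assms(2) by (intro dedge_inj) auto
  then have "dedge (c # v) = dedge ((c # u) @ c' # w) \<and> length ((c # u) @ c' # w) = Suc n \<and> sideof c' = s"
    using u assms(2) by simp
  then show ?thesis unfolding halfE_def by blast
qed

lemma half_base: "length w = n \<Longrightarrow> sideof c = s \<Longrightarrow> dedge (c # w) \<in> halfE (Suc n) w s"
  unfolding halfE_def by (rule CollectI, rule exI[of _ "[]"]) auto

lemma walk_set_edge:
  assumes "is_walk E p" "2 \<le> length p" "x \<in> set p"
  shows "\<exists>e\<in>E. x \<in> e"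
proof -
  obtain i where i: "i < length p" "p ! i = x" using assms(3) by (auto simp: in_set_conv_nth)
  show ?thesis
  proof (cases "Suc i < length p")
    case True
    have "{p ! i, p ! Suc i} \<in> E" by (rule walk_edge[OF assms(1) True])
    moreover have "x \<in> {p ! i, p ! Suc i}" using i by simp
    ultimately show ?thesis by blast
  next
    case False
    define j where "j = i - 1"
    have j: "i = Suc j" "Suc j < length p" using False assms(2) i unfolding j_def by linarith+
    have "{p ! j, p ! Suc j} \<in> E" by (rule walk_edge[OF assms(1) j(2)])
    moreover have "x \<in> {p ! j, p ! Suc j}" using i j by simp
    ultimately show ?thesis by blast
  qed
qed

lemma sd_top_vin: "vin (length w) (sd_top w)"
  unfolding sd_top_def using ends_vin[of w] by (rule conjunct1)
lemma sd_bot_vin: "vin (length w) (sd_bot w)"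
  unfolding sd_bot_def using ends_vin[of w] by (rule conjunct2)

lemma sd_top_bot: "sd_top w \<noteq> sd_bot w"
  unfolding sd_top_def sd_bot_def by (rule ends_distinct)

lemma dedge_top_bot: "dedge w = {sd_top w, sd_bot w}"
  unfolding dedge_def sd_top_def sd_bot_def by (rule refl)

lemma card_le2: "card {x, y} \<le> 2"
  by (cases "x = y") simp_all


lemma finite_dedge[simp]: "finite (dedge w)"
  by (simp add: dedge_def)

lemma len1: "length p = 1 \<Longrightarrow> p = [hd p]"
  by (cases p) auto

lemma len2: "length p = 2 \<Longrightarrow> p = [hd p, last p]"
  apply (cases p)
   apply simp
  apply (rename_tac a r)
  apply (case_tac r)
   apply auto
  done

lemma base_path:
  assumes "length w = n" "is_path (sd_edges n w) p" "hd p = sd_top w" "last p = sd_bot w"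
  shows "p = [sd_top w, sd_bot w]"
proof -
  have wk: "is_walk (sd_edges n w) p" and d: "distinct p"
    using assms(2) unfolding is_path_def by auto
  have ne: "p \<noteq> []" using wk unfolding is_walk_def by auto
  have l2: "2 \<le> length p"
  proof (rule ccontr)
    assume "\<not> 2 \<le> length p"
    moreover have "length p \<noteq> 0" using ne by simp
    ultimately have "length p = 1" by linarith
    then have "p = [hd p]" by (rule len1)
    then have "hd p = last p" by (metis last.simps)
    then show False using assms(3,4) sd_top_bot by metis
  qed
  have "set p \<subseteq> dedge w"
  proof
    fix x assume "x \<in> set p"
    then obtain e where "e \<in> sd_edges n w" "x \<in> e" using walk_set_edge[OF wk l2] by blast
    then show "x \<in> dedge w" using sd_base[OF assms(1)] by simp
  qed
  then have "card (set p) \<le> card (dedge w)" by (intro card_mono) simp_all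
  also have "\<dots> \<le> 2" unfolding dedge_def by (rule card_le2)
  finally have "length p \<le> 2" using distinct_card[OF d] by simp
  then have "length p = 2" using l2 by simp
  then have "p = [hd p, last p]" by (rule len2)
  then show ?thesis using assms(3,4) by simp
qed

lemma distinct_evens:
  assumes "distinct p" "length p = 2*m+1"
  shows "distinct (map (\<lambda>i. p ! (2*i)) [0..<Suc m])"
proof -
  have "inj_on (\<lambda>i. p ! (2*i)) {0..<Suc m}"
  proof (rule inj_onI)
    fix i j assume "i \<in> {0..<Suc m}" "j \<in> {0..<Suc m}" "p ! (2*i) = p ! (2*j)"
    moreover have "2*i < length p" "2*j < length p" using calculation assms(2) by auto
    ultimately show "i = j" using nth_eq_iff_index_eq[OF assms(1)] by fastforce
  qed
  then show ?thesis by (simp add: distinct_map del: upt_Suc)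
qed

lemma base_PL:
  assumes "length w = n" "is_path (sd_edges n w) p" "hd p = sd_top w" "last p = sd_bot w"
  shows "length p = 2^(n - length w) + 1 \<and> (\<forall>s. Mid w s \<in> set p \<longrightarrow> path_edges p \<subseteq> halfE n w s)"
proof -
  have p: "p = [sd_top w, sd_bot w]" by (rule base_path[OF assms])
  have "sd_top w \<in> dedge w" "sd_bot w \<in> dedge w" by (simp_all add: dedge_top_bot)
  then have "Mid w s \<noteq> sd_top w" "Mid w s \<noteq> sd_bot w" for s using dedge_not_mid by metis+
  then have "Mid w s \<notin> set p" for s by (simp add: p)
  then show ?thesis using p assms(1) by simp
qed

lemma even_idx: "a \<noteq> b \<Longrightarrow> a < length p \<Longrightarrow> b < length p \<Longrightarrow> distinct p \<Longrightarrow> p ! a \<noteq> p ! b"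
  by (simp add: nth_eq_iff_index_eq)

lemma PL:
  "length w \<le> n \<Longrightarrow> is_path (sd_edges n w) p \<Longrightarrow> hd p = sd_top w \<Longrightarrow> last p = sd_bot w \<Longrightarrow>
   length p = 2^(n - length w) + 1 \<and> (\<forall>s. Mid w s \<in> set p \<longrightarrow> path_edges p \<subseteq> halfE n w s)"
proof (induction n arbitrary: w p)
  case 0
  have lw0: "length w = 0" using 0 by simp
  show ?case using base_PL[OF lw0 0(2-4)] by simp
next
  case (Suc n)
  show ?case
  proof (cases "length w = Suc n")
    case True then show ?thesis using base_PL Suc.prems by blast
  next
    case False
    then have lw: "length w \<le> n" using Suc.prems(1) by simp
    have psd: "path_edges p \<subseteq> sd_edges (Suc n) w" and ne: "p \<noteq> []" and d: "distinct p"
      using Suc.prems(2) by (auto simp: is_path_def walk_eq)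
    have wk: "is_walk (D_edges (Suc n)) p" using psd ne sd_sub[of "Suc n" w] by (auto simp: walk_eq)
    have hv: "vin n (hd p)" using Suc.prems(3) sd_top_vin[of w] lw vin_mono by metis
    have lv: "vin n (last p)" using Suc.prems(4) sd_bot_vin[of w] lw vin_mono by metis
    obtain m W S where m: "length p = 2*m+1" and WS: "\<forall>i<m. p ! (2*i+1) = Mid (W i) (S i) \<and> length (W i) = n
            \<and> p ! (2*i) \<in> dedge (W i) \<and> p ! (2*i+2) \<in> dedge (W i)"
      using proj[OF wk hv lv] by blast
    have dW: "dedge (W i) = {p ! (2*i), p ! (2*i+2)}" if i: "i < m" for i
    proof -
      have "p ! (2*i) \<noteq> p ! (2*i+2)" using i m d by (intro even_idx) auto
      then show ?thesis using WS i by (intro dedge_two) auto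
    qed
    have pe: "path_edges p = (\<Union>i<m. Qe (W i) (S i))"
      by (rule pe_split[OF m]) (use WS dW in auto)
    define q where "q = map (\<lambda>i. p ! (2*i)) [0..<Suc m]"
    have pq: "path_edges q = {dedge (W i) | i. i < m}"
    proof -
      have "path_edges q = {{p ! (2*i), p ! (2*Suc i)} | i. i < m}"
        unfolding q_def by (rule path_edges_map_upt)
      also have "\<dots> = {dedge (W i) | i. i < m}"
        using dW by (auto simp del: upt_Suc)
      finally show ?thesis .
    qed
    have qsd: "path_edges q \<subseteq> sd_edges n w"
    proof
      fix e assume "e \<in> path_edges q"
      then obtain i where i: "i < m" "e = dedge (W i)" using pq by blast
      have "{p ! (2*i), Mid (W i) (S i)} \<in> Qe (W i) (S i)" using WS i unfolding Qe_def by blast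
      then obtain c where c: "{p ! (2*i), Mid (W i) (S i)} = dedge (c # W i)" using Qe_sub by blast
      have "{p ! (2*i), Mid (W i) (S i)} \<in> path_edges p"
        using pe i \<open>{p ! (2*i), Mid (W i) (S i)} \<in> Qe (W i) (S i)\<close> by blast
      then have "dedge (c # W i) \<in> sd_edges (Suc n) w" using c psd by auto
      then show "e \<in> sd_edges n w" using sd_step WS i lw by auto
    qed
    have dq: "distinct q" unfolding q_def by (rule distinct_evens[OF d m])
    have qpath: "is_path (sd_edges n w) q" using qsd dq unfolding is_path_def walk_eq q_def by simp
    have hq: "hd q = sd_top w"
      using Suc.prems(3) ne unfolding q_def by (simp add: hd_conv_nth del: upt_Suc)
    have lq: "last q = sd_bot w"
    proof -
      have "last q = p ! (2*m)" unfolding q_def by (simp add: last_conv_nth del: upt_Suc)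
      also have "\<dots> = last p" using m ne by (simp add: last_conv_nth)
      finally show ?thesis using Suc.prems(4) by simp
    qed
    have IH: "length q = 2^(n - length w) + 1 \<and> (\<forall>s. Mid w s \<in> set q \<longrightarrow> path_edges q \<subseteq> halfE n w s)"
      by (rule Suc.IH[OF lw qpath hq lq])
    have mm: "m = 2^(n - length w)" using IH unfolding q_def by simp
    have len: "length p = 2^(Suc n - length w) + 1"
      using m mm lw by (simp add: Suc_diff_le)
    have half: "path_edges p \<subseteq> halfE (Suc n) w s" if sp: "Mid w s \<in> set p" for s
    proof (cases "length w = n")
      case True
      then have m1: "m = 1" using mm by simp
      have "dedge (W 0) = {p ! 0, p ! 2}" using dW[of 0] m1 by (simp add: numeral_2_eq_2)
      also have "\<dots> = {hd p, last p}" using m m1 ne by (simp add: hd_conv_nth last_conv_nth)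
      also have "\<dots> = dedge w" using Suc.prems(3,4) by (simp add: dedge_top_bot)
      finally have W0: "W 0 = w" using WS m1 True by (intro dedge_inj) auto
      obtain j where j: "j < length p" "p ! j = Mid w s" using sp by (auto simp: in_set_conv_nth)
      have "p ! 0 \<in> dedge w" "p ! 2 \<in> dedge w" using WS m1 W0 by (auto simp: numeral_2_eq_2)
      then have "j \<noteq> 0" "j \<noteq> 2" using j dedge_not_mid by metis+
      then have "j = 1" using j m m1 by simp
      then have S0: "S 0 = s" using WS j m1 W0 by simp
      have "path_edges p = Qe w s" using pe m1 W0 S0 by (simp add: lessThan_Suc)
      show ?thesis
      proof
        fix e assume "e \<in> path_edges p"
        then have "e \<in> Qe w s" using \<open>path_edges p = Qe w s\<close> by simp
        then obtain c where "sideof c = s" "e = dedge (c # w)" using Qe_sub by blast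
        then show "e \<in> halfE (Suc n) w s" using half_base True by blast
      qed
    next
      case False
      then have "vin n (Mid w s)" using lw by simp
      obtain j where j: "j < length p" "p ! j = Mid w s" using sp by (auto simp: in_set_conv_nth)
      then have "even j" using alt[OF wk hv j(1)] \<open>vin n (Mid w s)\<close> by simp
      then obtain i where i: "j = 2*i" by blast
      then have "i < Suc m" using j m by simp
      then have "q ! i = Mid w s" using i j unfolding q_def by (simp del: upt_Suc)
      moreover have "i < length q" using \<open>i < Suc m\<close> unfolding q_def by simp
      ultimately have "Mid w s \<in> set q" by (metis nth_mem)
      then have qh: "path_edges q \<subseteq> halfE n w s" using IH by blast
      show ?thesis
      proof
        fix e assume "e \<in> path_edges p"
        then obtain i where i: "i < m" "e \<in> Qe (W i) (S i)" using pe by blast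
        then obtain c where c: "e = dedge (c # W i)" using Qe_sub by blast
        have "dedge (W i) \<in> halfE n w s" using qh pq i by blast
        then show "e \<in> halfE (Suc n) w s" using c half_step WS i by blast
      qed
    qed
    show ?thesis using len half by blast
  qed
qed


fun pe :: "quad list \<Rightarrow> real \<times> real" where
  "pe [] = (0, 1)"
| "pe (c # w) = (if c \<in> {UA, UB} then (fst (pe w), (fst (pe w) + snd (pe w)) / 2)
                 else ((fst (pe w) + snd (pe w)) / 2, snd (pe w)))"

fun pos :: "dvert \<Rightarrow> real" where
  "pos Top = 0" | "pos Bot = 1" | "pos (Mid w s) = (fst (pe w) + snd (pe w)) / 2"

lemma pe_ends: "pe w = (pos (fst (ends w)), pos (snd (ends w)))"
proof (induction w)
  case Nil then show ?case by simp
next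
  case (Cons c w) then show ?case by (cases c) (auto simp: ends_Cons)
qed

lemma pe_len: "snd (pe w) - fst (pe w) = 1 / 2 ^ length w"
proof (induction w)
  case Nil then show ?case by simp
next
  case (Cons c w) then show ?case by (cases c) (auto simp: field_simps)
qed

lemma edge_pos: "{a, b} \<in> D_edges n \<Longrightarrow> \<bar>pos a - pos b\<bar> = 1 / 2 ^ n"
proof -
  assume "{a, b} \<in> D_edges n"
  then obtain w where w: "length w = n" "{a, b} = dedge w" by (auto simp: D_edges_iff)
  have h: "pos (snd (ends w)) - pos (fst (ends w)) = 1 / 2 ^ n"
    using pe_len[of w] pe_ends[of w] w(1) by simp
  have "\<bar>pos (fst (ends w)) - pos (snd (ends w))\<bar> = \<bar>pos (snd (ends w)) - pos (fst (ends w))\<bar>"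
    by (rule abs_minus_commute)
  also have "\<dots> = 1 / 2 ^ n" using h by simp
  finally have "\<bar>pos (fst (ends w)) - pos (snd (ends w))\<bar> = 1 / 2 ^ n" .
  moreover have "(a = fst (ends w) \<and> b = snd (ends w)) \<or> (a = snd (ends w) \<and> b = fst (ends w))"
    using w(2) ends_distinct[of w] unfolding dedge_def by (auto simp: doubleton_eq_iff)
  ultimately show ?thesis by (auto simp: abs_minus_commute)
qed

lemma walk_pos:
  assumes "is_walk (D_edges n) xs"
  shows "i < length xs \<Longrightarrow> \<bar>pos (xs ! i) - pos (xs ! 0)\<bar> \<le> real i / 2 ^ n"
proof (induction i)
  case 0 then show ?case by simp
next
  case (Suc i)
  have "\<bar>pos (xs ! Suc i) - pos (xs ! i)\<bar> = 1 / 2 ^ n"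
    using edge_pos[OF walk_edge[OF assms Suc.prems]] by (simp add: abs_minus_commute)
  moreover have "\<bar>pos (xs ! i) - pos (xs ! 0)\<bar> \<le> real i / 2 ^ n" using Suc by simp
  ultimately have "\<bar>pos (xs ! Suc i) - pos (xs ! 0)\<bar> \<le> real i / 2 ^ n + 1 / 2 ^ n" by linarith
  then show ?case by (simp add: add_divide_distrib)
qed

lemma top_bot_pos: "pos (sd_bot w) - pos (sd_top w) = 1 / 2 ^ length w"
  using pe_len[of w] pe_ends[of w] by (simp add: sd_top_def sd_bot_def)

lemma walk_lower:
  assumes "is_walk (D_edges n) xs" "hd xs = sd_top w" "last xs = sd_bot w" "length xs = Suc m" "length w \<le> n"
  shows "2 ^ (n - length w) \<le> m"
proof -
  have ne: "xs \<noteq> []" using assms(4) by auto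
  have "\<bar>pos (xs ! m) - pos (xs ! 0)\<bar> \<le> real m / 2 ^ n" using walk_pos[OF assms(1)] assms(4) by simp
  moreover have "xs ! m = sd_bot w" using assms(3,4) ne by (simp add: last_conv_nth)
  moreover have "xs ! 0 = sd_top w" using assms(2) ne by (simp add: hd_conv_nth)
  ultimately have "1 / 2 ^ length w \<le> real m / 2 ^ n" using top_bot_pos[of w] by simp
  then have "2 ^ n \<le> real m * 2 ^ length w" by (simp add: field_simps)
  moreover have "(2::real) ^ n = 2 ^ (n - length w) * 2 ^ length w"
    using assms(5) by (simp add: power_add[symmetric])
  ultimately have "(2::real) ^ (n - length w) \<le> real m" by simp
  then show ?thesis by (metis of_nat_le_iff of_nat_numeral of_nat_power)
qed

lemma halfE_disj: "halfE n w Lft \<inter> halfE n w Rgt = {}"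
proof -
  have False if "dedge (u @ c # w) = dedge (u' @ c' # w)" "length (u @ c # w) = n" "length (u' @ c' # w) = n"
    "sideof c = Lft" "sideof c' = Rgt" for u c u' c'
  proof -
    have "u @ c # w = u' @ c' # w" using that by (intro dedge_inj) auto
    moreover have "length u = length u'" using that by simp
    ultimately have "c = c'" by simp
    then show False using that by simp
  qed
  then show ?thesis unfolding halfE_def by blast
qed

lemma rev_path: "is_path E p \<Longrightarrow> is_path E (rev p)"
  by (simp add: is_path_def walk_eq path_edges_rev)

lemma part2:
  assumes "subdiamond n w" "height n w = 2 ^ t" "principal_cycle n w C"
  shows "card C = 2 ^ (t + 1)"
proof -
  have lw: "length w \<le> n" using assms(1) by (simp add: subdiamond_def)
  obtain p1 p2 where p: "is_path (sd_edges n w) p1" "hd p1 = sd_top w" "last p1 = sd_bot w"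
    "sd_leftmost w \<in> set p1" "is_path (sd_edges n w) p2" "hd p2 = sd_bot w" "last p2 = sd_top w"
    "sd_rightmost w \<in> set p2" "C = path_edges p1 \<union> path_edges p2"
    using assms(3) unfolding principal_cycle_def by blast
  have r2: "is_path (sd_edges n w) (rev p2)" using rev_path[OF p(5)] .
  have ne2: "p2 \<noteq> []" using p(5) by (simp add: is_path_def is_walk_def)
  have hr: "hd (rev p2) = sd_top w" using p(7) ne2 by (simp add: hd_rev)
  have lr: "last (rev p2) = sd_bot w" using p(6) ne2 by (simp add: last_rev)
  have A: "length p1 = 2^(n - length w) + 1 \<and> path_edges p1 \<subseteq> halfE n w Lft"
    using PL[OF lw p(1-3)] p(4) by (simp add: sd_leftmost_def)
  have B: "length (rev p2) = 2^(n - length w) + 1 \<and> path_edges (rev p2) \<subseteq> halfE n w Rgt"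
    using PL[OF lw r2 hr lr] p(8) by (simp add: sd_rightmost_def)
  have d1: "distinct p1" and d2: "distinct p2" using p(1,5) by (auto simp: is_path_def)
  have c1: "card (path_edges p1) = 2^(n - length w)" using card_path_edges[OF d1] A by simp
  have c2: "card (path_edges p2) = 2^(n - length w)" using card_path_edges[OF d2] B by simp
  have disj: "path_edges p1 \<inter> path_edges p2 = {}"
    using A B halfE_disj[of n w] path_edges_rev[of p2] by blast
  have cC: "card C = 2 * 2^(n - length w)"
    using p(9) c1 c2 card_Un_disjoint[OF finite_path_edges finite_path_edges disj] by simp
  have wk1: "is_walk (D_edges n) p1" using p(1) sd_sub[of n w] by (auto simp: is_path_def walk_eq)
  have "height n w = 2 ^ (n - length w)"
    unfolding height_def gdist_def
  proof (rule Least_equality)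
    show "\<exists>xs. is_walk (D_edges n) xs \<and> hd xs = sd_top w \<and> last xs = sd_bot w \<and> length xs = Suc (2 ^ (n - length w))"
      using wk1 p(2,3) A by auto
  next
    fix m assume "\<exists>xs. is_walk (D_edges n) xs \<and> hd xs = sd_top w \<and> last xs = sd_bot w \<and> length xs = Suc m"
    then show "2 ^ (n - length w) \<le> m" using walk_lower lw by blast
  qed
  then have "t = n - length w" using assms(2) by simp
  then show ?thesis using cC by simp
qed


fun lift :: "('a \<Rightarrow> 'a \<Rightarrow> 'a) \<Rightarrow> 'a list \<Rightarrow> 'a list" where
  "lift f [] = []" | "lift f [x] = [x]" | "lift f (x # y # r) = x # f x y # lift f (y # r)"


lemma lift_hd: "q \<noteq> [] \<Longrightarrow> hd (lift f q) = hd q"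
  by (induction f q rule: lift.induct) auto

lemma lift_ne: "q \<noteq> [] \<Longrightarrow> lift f q \<noteq> []"
  by (induction f q rule: lift.induct) auto

lemma lift_last: "q \<noteq> [] \<Longrightarrow> last (lift f q) = last q"
proof (induction f q rule: lift.induct)
  case (3 f x y r)
  have "lift f (y # r) \<noteq> []" by (rule lift_ne) simp
  then show ?case using 3 by simp
qed simp_all

lemma lift_set: "set q \<subseteq> set (lift f q)"
  by (induction f q rule: lift.induct) auto


definition wd :: "nat \<Rightarrow> dvert \<Rightarrow> dvert \<Rightarrow> quad list" where
  "wd n x y = (THE w. length w = n \<and> dedge w = {x, y})"

lemma wd_eq: "length w = n \<Longrightarrow> dedge w = {x, y} \<Longrightarrow> wd n x y = w"
proof -
  assume a: "length w = n" "dedge w = {x, y}"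
  have "(THE w. length w = n \<and> dedge w = {x, y}) = w"
  proof (rule the_equality)
    show "length w = n \<and> dedge w = {x, y}" using a by simp
    fix w' assume "length w' = n \<and> dedge w' = {x, y}"
    then show "w' = w" using a dedge_inj[of w' w] by simp
  qed
  then show ?thesis unfolding wd_def .
qed

definition fm :: "nat \<Rightarrow> (quad list \<Rightarrow> side) \<Rightarrow> dvert \<Rightarrow> dvert \<Rightarrow> dvert" where
  "fm n \<sigma> x y = Mid (wd n x y) (\<sigma> (wd n x y))"


lemma vin_of_path:
  assumes "path_edges q \<subseteq> D_edges n" "2 \<le> length q" "z \<in> set q"
  shows "vin n z"
proof -
  have "q \<noteq> []" using assms(2) by (cases q) simp_all
  then have wk: "is_walk (D_edges n) q" using assms(1) unfolding walk_eq by blast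
  obtain e where e: "e \<in> D_edges n" "z \<in> e" using walk_set_edge[OF wk assms(2,3)] by blast
  then obtain w where w: "length w = n" "e = dedge w" unfolding D_edges_iff by blast
  show ?thesis using dedge_vin[of z w] e(2) w by simp
qed

lemma MS_mem: "length w = n \<Longrightarrow> dedge w \<in> P \<Longrightarrow> Mid w s \<in> {Mid w s | w s. length w = n \<and> dedge w \<in> P}"
  by blast

lemma MS_mono: "P \<subseteq> P' \<Longrightarrow> {Mid w s | w s. length w = n \<and> dedge w \<in> P} \<subseteq> {Mid w s | w s. length w = n \<and> dedge w \<in> P'}"
  by blast

lemma lift_main:
  assumes "path_edges q \<subseteq> D_edges n" "distinct q" "q \<noteq> []"
  shows "path_edges (lift (fm n \<sigma>) q) = (\<Union>w\<in>{w. length w = n \<and> dedge w \<in> path_edges q}. Qe w (\<sigma> w))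
     \<and> set (lift (fm n \<sigma>) q) \<subseteq> set q \<union> {Mid w s | w s. length w = n \<and> dedge w \<in> path_edges q}
     \<and> distinct (lift (fm n \<sigma>) q)"
  using assms
proof (induction q)
  case Nil then show ?case by simp
next
  case (Cons x r)
  show ?case
  proof (cases r)
    case Nil then show ?thesis by simp
  next
    case (Cons y r')
    let ?f = "fm n \<sigma>"
    let ?L = "lift ?f r"
    have pr: "path_edges r \<subseteq> D_edges n" using Cons.prems(1) \<open>r = y # r'\<close> by (auto simp: path_edges_Cons2)
    have dr: "distinct r" using Cons.prems(2) by simp
    have IH: "path_edges ?L = (\<Union>w\<in>{w. length w = n \<and> dedge w \<in> path_edges r}. Qe w (\<sigma> w))
     \<and> set ?L \<subseteq> set r \<union> {Mid w s | w s. length w = n \<and> dedge w \<in> path_edges r}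
     \<and> distinct ?L" using Cons.IH[OF pr dr] \<open>r = y # r'\<close> by simp
    have exy: "{x, y} \<in> D_edges n" using Cons.prems(1) \<open>r = y # r'\<close> by (auto simp: path_edges_Cons2)
    then obtain w0 where w0: "length w0 = n" "dedge w0 = {x, y}" by (auto simp: D_edges_iff)
    have fxy: "?f x y = Mid w0 (\<sigma> w0)" using wd_eq[OF w0] by (simp add: fm_def)
    have rne: "r \<noteq> []" using \<open>r = y # r'\<close> by simp
    have "?L = hd ?L # tl ?L" using lift_ne[OF rne] by simp
    moreover have "hd ?L = y" using lift_hd[OF rne] \<open>r = y # r'\<close> by simp
    ultimately have Lh: "?L = y # tl ?L" by simp
    have lx: "lift ?f (x # r) = x # Mid w0 (\<sigma> w0) # ?L" using \<open>r = y # r'\<close> fxy by simp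
    have pe1: "path_edges (lift ?f (x # r)) = insert {x, Mid w0 (\<sigma> w0)} (insert {Mid w0 (\<sigma> w0), y} (path_edges ?L))"
      unfolding lx by (subst Lh, subst path_edges_Cons2, subst path_edges_Cons2, subst Lh[symmetric]) (rule refl)
    have Q0: "Qe w0 (\<sigma> w0) = {{x, Mid w0 (\<sigma> w0)}, {Mid w0 (\<sigma> w0), y}}"
      unfolding Qe_def w0(2) by (auto simp: insert_commute)
    have peq: "path_edges (x # r) = insert {x, y} (path_edges r)" using \<open>r = y # r'\<close> by (simp add: path_edges_Cons2)
    have weq: "(length w = n \<and> dedge w = {x, y}) \<longleftrightarrow> w = w0" for w
      using w0 dedge_inj[of w w0] by auto
    have ws: "{w. length w = n \<and> dedge w \<in> path_edges (x # r)} = insert w0 {w. length w = n \<and> dedge w \<in> path_edges r}"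
    proof (rule set_eqI)
      fix w show "w \<in> {w. length w = n \<and> dedge w \<in> path_edges (x # r)} \<longleftrightarrow> w \<in> insert w0 {w. length w = n \<and> dedge w \<in> path_edges r}"
        unfolding peq using weq[of w] w0 by blast
    qed
    have part1: "path_edges (lift ?f (x # r)) = (\<Union>w\<in>{w. length w = n \<and> dedge w \<in> path_edges (x # r)}. Qe w (\<sigma> w))"
      unfolding pe1 ws UN_insert Q0 using IH by simp
    have part2: "set (lift ?f (x # r)) \<subseteq> set (x # r) \<union> {Mid w s | w s. length w = n \<and> dedge w \<in> path_edges (x # r)}"
    proof
      fix z assume "z \<in> set (lift ?f (x # r))"
      then have "z = x \<or> z = Mid w0 (\<sigma> w0) \<or> z \<in> set ?L" unfolding lx by simp
      moreover have "Mid w0 (\<sigma> w0) \<in> {Mid w s | w s. length w = n \<and> dedge w \<in> path_edges (x # r)}"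
        using MS_mem[of w0 n "path_edges (x # r)" "\<sigma> w0"] w0 peq by simp
      moreover have "{Mid w s | w s. length w = n \<and> dedge w \<in> path_edges r} \<subseteq> {Mid w s | w s. length w = n \<and> dedge w \<in> path_edges (x # r)}"
        using MS_mono[of "path_edges r" "path_edges (x # r)" n] peq by auto
      then have "set r \<union> {Mid w s | w s. length w = n \<and> dedge w \<in> path_edges r} \<subseteq> set (x # r) \<union> {Mid w s | w s. length w = n \<and> dedge w \<in> path_edges (x # r)}"
        by (intro Un_mono) auto
      then have "set ?L \<subseteq> set (x # r) \<union> {Mid w s | w s. length w = n \<and> dedge w \<in> path_edges (x # r)}"
        by (rule subset_trans[OF conjunct1[OF conjunct2[OF IH]]])
      ultimately show "z \<in> set (x # r) \<union> {Mid w s | w s. length w = n \<and> dedge w \<in> path_edges (x # r)}"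
        by auto
    qed
    have l2: "2 \<le> length (x # r)" using \<open>r = y # r'\<close> by simp
    have vq: "vin n z" if "z \<in> set (x # r)" for z using vin_of_path[OF Cons.prems(1) l2 that] .
    have nx: "x \<notin> set r" using Cons.prems(2) by simp
    have x1: "x \<notin> set ?L"
    proof
      assume "x \<in> set ?L"
      then have "x \<in> set r \<or> (\<exists>w s. x = Mid w s \<and> length w = n)" using IH by blast
      then show False using nx vq[of x] by auto
    qed
    have m1: "Mid w0 (\<sigma> w0) \<notin> set ?L"
    proof
      assume "Mid w0 (\<sigma> w0) \<in> set ?L"
      then have "Mid w0 (\<sigma> w0) \<in> set r \<or> (\<exists>w s. Mid w0 (\<sigma> w0) = Mid w s \<and> length w = n \<and> dedge w \<in> path_edges r)"
        using IH by blast
      moreover have "\<not> vin n (Mid w0 (\<sigma> w0))" using w0 by simp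
      then have "Mid w0 (\<sigma> w0) \<notin> set r" using vq[of "Mid w0 (\<sigma> w0)"] w0 by auto
      ultimately have "dedge w0 \<in> path_edges r" by auto
      then have "x \<in> set r" using w0 path_edges_subset_set by fastforce
      then show False using nx by simp
    qed
    have xm: "x \<noteq> Mid w0 (\<sigma> w0)" using vq[of x] w0 by auto
    have part3: "distinct (lift ?f (x # r))" unfolding lx using IH x1 m1 xm by simp
    show ?thesis using part1 part2 part3 by blast
  qed
qed

lemma sd_up: "dedge w \<in> sd_edges n w' \<Longrightarrow> length w = n \<Longrightarrow> dedge (c # w) \<in> sd_edges (Suc n) w'"
proof -
  assume a: "dedge w \<in> sd_edges n w'" "length w = n"
  then obtain u where u: "dedge w = dedge (u @ w')" "length (u @ w') = n" by (auto simp: sd_edges_def)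
  then have "w = u @ w'" using a(2) by (intro dedge_inj) auto
  then have "dedge (c # w) = dedge ((c # u) @ w') \<and> length ((c # u) @ w') = Suc n" using a(2) by simp
  then show ?thesis unfolding sd_edges_def by blast
qed

lemma lift_path:
  assumes "is_path (sd_edges n w') q"
  shows "is_path (sd_edges (Suc n) w') (lift (fm n \<sigma>) q)
    \<and> path_edges (lift (fm n \<sigma>) q) = (\<Union>w\<in>{w. length w = n \<and> dedge w \<in> path_edges q}. Qe w (\<sigma> w))"
proof -
  have q: "path_edges q \<subseteq> sd_edges n w'" "distinct q" "q \<noteq> []"
    using assms by (auto simp: is_path_def walk_eq)
  have qD: "path_edges q \<subseteq> D_edges n" using q(1) sd_sub by blast
  note M = lift_main[OF qD q(2,3), of \<sigma>]
  have "path_edges (lift (fm n \<sigma>) q) \<subseteq> sd_edges (Suc n) w'"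
  proof
    fix e assume "e \<in> path_edges (lift (fm n \<sigma>) q)"
    then obtain w where w: "length w = n" "dedge w \<in> path_edges q" "e \<in> Qe w (\<sigma> w)" using M by blast
    then obtain c where "e = dedge (c # w)" using Qe_sub by blast
    then show "e \<in> sd_edges (Suc n) w'" using sd_up w q(1) by blast
  qed
  then show ?thesis using M lift_ne[OF q(3)] by (simp add: is_path_def walk_eq)
qed


lemma rot:
  assumes "is_cycle E xs"
  shows "is_cycle E (rotate1 xs) \<and> cyc_edges (rotate1 xs) = cyc_edges xs \<and> hd (rotate1 xs) = xs ! 1"
proof -
  have L: "3 \<le> length xs" "distinct xs" "cyc_edges xs \<subseteq> E" using assms by (auto simp: cycle_eq)
  obtain x r where xr: "xs = x # r" using L(1) by (cases xs) auto
  have rne: "r \<noteq> []" using L(1) xr by auto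
  have rx: "r @ [x] = hd r # (tl r @ [x])" using rne by simp
  have "cyc_edges xs = path_edges (x # (r @ [x]))" using xr by (simp add: cyc_edges_eq)
  also have "\<dots> = insert {x, hd r} (path_edges (r @ [x]))"
    by (subst rx, subst path_edges_Cons2, subst rx[symmetric]) (rule refl)
  finally have c1: "cyc_edges xs = insert {x, hd r} (path_edges (r @ [x]))" .
  have "cyc_edges (r @ [x]) = path_edges ((r @ [x]) @ [hd r])" using rne by (simp add: cyc_edges_eq)
  also have "\<dots> = insert {x, hd r} (path_edges (r @ [x]))" by (subst path_edges_snoc) simp_all
  finally have c2: "cyc_edges (r @ [x]) = insert {x, hd r} (path_edges (r @ [x]))" .
  have rot: "rotate1 xs = r @ [x]" using xr by simp
  have e: "cyc_edges (rotate1 xs) = cyc_edges xs" using c1 c2 rot by simp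
  have "is_cycle E (rotate1 xs)" unfolding cycle_eq using L e rot xr by simp
  moreover have "hd (rotate1 xs) = xs ! 1" using rot xr rne by (cases r) simp_all
  ultimately show ?thesis using e by simp
qed

lemma sd_self: "length w = n \<Longrightarrow> dedge (c # w) \<in> sd_edges (Suc n) w"
  unfolding sd_edges_def by (rule CollectI, rule exI[of _ "[c]"]) simp

lemma Qe_sd: "length w = n \<Longrightarrow> Qe w s \<subseteq> sd_edges (Suc n) w"
  using Qe_sub sd_self by blast

lemma quad_principal:
  assumes "length w = n" "is_cycle (D_edges (Suc n)) xs" "cyc_edges xs = Qe w Lft \<union> Qe w Rgt"
  shows "principal_cycle (Suc n) w (cyc_edges xs)"
proof -
  let ?t = "sd_top w" and ?b = "sd_bot w"
  define p1 where "p1 = [?t, Mid w Lft, ?b]"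
  define p2 where "p2 = [?b, Mid w Rgt, ?t]"
  have tb: "?t \<in> dedge w" "?b \<in> dedge w" by (simp_all add: dedge_top_bot)
  have nm: "?t \<noteq> Mid w s" "?b \<noteq> Mid w s" "Mid w s \<noteq> ?t" "Mid w s \<noteq> ?b" for s
    using tb dedge_not_mid by metis+
  have tb2: "?t \<noteq> ?b" by (rule sd_top_bot)
  have q1: "Qe w Lft = {{?t, Mid w Lft}, {?b, Mid w Lft}}" by (simp add: Qe_def dedge_top_bot)
  have q2: "Qe w Rgt = {{?t, Mid w Rgt}, {?b, Mid w Rgt}}" by (simp add: Qe_def dedge_top_bot)
  have pe1: "path_edges p1 = Qe w Lft" unfolding p1_def q1
    by (simp add: path_edges_Cons2 insert_commute)
  have pe2: "path_edges p2 = Qe w Rgt" unfolding p2_def q2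
    by (simp add: path_edges_Cons2 insert_commute)
  have ip1: "is_path (sd_edges (Suc n) w) p1" unfolding is_path_def walk_eq
    using pe1 Qe_sd[OF assms(1)] nm tb2 by (simp add: p1_def)
  have ip2: "is_path (sd_edges (Suc n) w) p2" unfolding is_path_def walk_eq
    using pe2 Qe_sd[OF assms(1)] nm tb2 by (simp add: p2_def)
  show ?thesis unfolding principal_cycle_def
  proof (intro conjI exI)
    show "subdiamond (Suc n) w" using assms(1) by (simp add: subdiamond_def)
    show "is_cycle (D_edges (Suc n)) xs" by (rule assms(2))
    show "cyc_edges xs = cyc_edges xs" ..
    show "is_path (sd_edges (Suc n) w) p1" by (rule ip1)
    show "is_path (sd_edges (Suc n) w) p2" by (rule ip2)
    show "hd p1 = sd_top w" "last p1 = sd_bot w" "hd p2 = sd_bot w" "last p2 = sd_top w"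
      by (simp_all add: p1_def p2_def)
    show "sd_leftmost w \<in> set p1" "sd_rightmost w \<in> set p2"
      by (simp_all add: p1_def p2_def sd_leftmost_def sd_rightmost_def)
    show "cyc_edges xs = path_edges p1 \<union> path_edges p2" using assms(3) pe1 pe2 by simp
  qed
qed


lemma ginj_aux:
  assumes "distinct xs" "length xs = L" "zs = xs @ [hd xs]" "a < b" "b \<le> L" "\<not> (a = 0 \<and> b = L)"
  shows "zs ! a \<noteq> zs ! b"
proof (cases "b < L")
  case True
  then have "zs ! a = xs ! a" "zs ! b = xs ! b" using assms by (simp_all add: nth_append)
  then show ?thesis using assms True nth_eq_iff_index_eq[OF assms(1)] by auto
next
  case False
  then have bL: "b = L" using assms by simp
  have ne: "xs \<noteq> []" using assms(2,4,5) by auto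
  have "zs ! b = xs ! 0" using bL assms(2,3) ne by (simp add: nth_append hd_conv_nth)
  moreover have "zs ! a = xs ! a" using assms bL by (simp add: nth_append)
  moreover have "a \<noteq> 0" using assms bL by simp
  ultimately show ?thesis using assms bL nth_eq_iff_index_eq[OF assms(1), of a 0] by auto
qed

lemma cycle_step:
  assumes IH: "\<forall>ys. is_cycle (D_edges n) ys \<longrightarrow> (\<exists>w. subdiamond n w \<and> principal_cycle n w (cyc_edges ys))"
    and cyc: "is_cycle (D_edges (Suc n)) xs" and hv: "vin n (hd xs)"
  shows "\<exists>w. subdiamond (Suc n) w \<and> principal_cycle (Suc n) w (cyc_edges xs)"
proof -
  have L3: "3 \<le> length xs" and d: "distinct xs" and cE: "cyc_edges xs \<subseteq> D_edges (Suc n)"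
    using cyc by (auto simp: cycle_eq)
  have ne: "xs \<noteq> []" using L3 by auto
  define zs where "zs = xs @ [hd xs]"
  have pz: "path_edges zs = cyc_edges xs" using ne by (simp add: cyc_edges_eq zs_def)
  have wk: "is_walk (D_edges (Suc n)) zs" using pz cE unfolding walk_eq zs_def by simp
  have hz: "hd zs = hd xs" using ne by (simp add: zs_def)
  have lz: "last zs = hd xs" by (simp add: zs_def)
  obtain m W S where m: "length zs = 2*m+1" and WS: "\<forall>i<m. zs ! (2*i+1) = Mid (W i) (S i) \<and> length (W i) = n
            \<and> zs ! (2*i) \<in> dedge (W i) \<and> zs ! (2*i+2) \<in> dedge (W i)"
    using proj[OF wk] hv hz lz by auto
  have Lm: "length xs = 2*m" using m by (simp add: zs_def)
  have m2: "2 \<le> m" using Lm L3 by simp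
  have zne: "zs ! a \<noteq> zs ! b" if "a < b" "b \<le> 2*m" "\<not> (a = 0 \<and> b = 2*m)" for a b
    using ginj_aux[OF d Lm zs_def] that by blast
  have dW: "dedge (W i) = {zs ! (2*i), zs ! (2*i+2)}" if i: "i < m" for i
  proof -
    have "\<not> (2*i = 0 \<and> 2*i+2 = 2*m)" using i m2 by linarith
    moreover have "2*i+2 \<le> 2*m" using i by simp
    ultimately have "zs ! (2*i) \<noteq> zs ! (2*i+2)" using zne[of "2*i" "2*i+2"] by simp
    then show ?thesis using WS i by (intro dedge_two) auto
  qed
  have Cx: "cyc_edges xs = (\<Union>i<m. Qe (W i) (S i))"
    using pe_split[OF m, of W S] WS dW pz by simp
  show ?thesis
  proof (cases "m = 2")
    case True
    have z4: "zs ! 4 = zs ! 0" using ne Lm True by (simp add: zs_def nth_append hd_conv_nth)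
    have "dedge (W 1) = {zs ! 2, zs ! 4}" using dW[of 1] True by simp
    also have "\<dots> = dedge (W 0)" using dW[of 0] True z4 by (simp add: insert_commute numeral_2_eq_2)
    finally have W10: "W 1 = W 0" using WS True by (intro dedge_inj) auto
    have "zs ! 1 \<noteq> zs ! 3" using zne[of 1 3] True by simp
    moreover have "zs ! 1 = Mid (W 0) (S 0)" using spec[OF WS, of 0] True by simp
    moreover have "zs ! 3 = Mid (W 1) (S 1)" using spec[OF WS, of 1] True by (simp add: numeral_3_eq_3)
    ultimately have S10: "S 1 \<noteq> S 0" using W10 by auto
    have "cyc_edges xs = Qe (W 0) (S 0) \<union> Qe (W 0) (S 1)"
      using Cx True W10 by (simp add: numeral_2_eq_2 lessThan_Suc Un_commute)
    also have "\<dots> = Qe (W 0) Lft \<union> Qe (W 0) Rgt" using S10 by (cases "S 0"; cases "S 1") (auto simp: Un_commute)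
    finally have "principal_cycle (Suc n) (W 0) (cyc_edges xs)"
      using quad_principal[of "W 0" n xs] WS True cyc by simp
    moreover have "subdiamond (Suc n) (W 0)" using WS True by (simp add: subdiamond_def)
    ultimately show ?thesis by blast
  next
    case False
    then have m3: "3 \<le> m" using m2 by simp
    define g where "g i = zs ! (2*i)" for i
    define ys where "ys = map g [0..<m]"
    have gm: "g m = g 0" using ne Lm by (simp add: g_def zs_def nth_append hd_conv_nth)
    have ysne: "ys \<noteq> []" using m3 by (simp add: ys_def)
    have hys: "hd ys = g 0" using m3 by (simp add: ys_def hd_map)
    have ysn: "ys @ [hd ys] = map g [0..<Suc m]" using hys gm by (simp add: ys_def)
    have cys: "cyc_edges ys = {dedge (W i) | i. i < m}"
    proof -
      have "cyc_edges ys = path_edges (map g [0..<Suc m])" unfolding cyc_edges_eq[OF ysne] ysn by (rule refl)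
      also have "\<dots> = {{g i, g (Suc i)} | i. i < m}" by (rule path_edges_map_upt)
      also have "\<dots> = {dedge (W i) | i. i < m}" using dW by (auto simp: g_def)
      finally show ?thesis .
    qed
    have dys: "distinct ys"
    proof -
      have "inj_on g {0..<m}"
      proof (rule inj_onI)
        fix i j assume ij: "i \<in> {0..<m}" "j \<in> {0..<m}" "g i = g j"
        show "i = j"
        proof (rule ccontr)
          assume "i \<noteq> j"
          then show False
          proof (cases "i < j")
            case True then show False using zne[of "2*i" "2*j"] ij by (auto simp: g_def)
          next
            case False then show False using zne[of "2*j" "2*i"] ij \<open>i \<noteq> j\<close> by (auto simp: g_def)
          qed
        qed
      qed
      then show ?thesis by (simp add: ys_def distinct_map)
    qed
    have ysc: "is_cycle (D_edges n) ys"
      unfolding cycle_eq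
    proof (intro conjI)
      show "3 \<le> length ys" using m3 by (simp add: ys_def)
      show "distinct ys" by (rule dys)
      show "cyc_edges ys \<subseteq> D_edges n"
      proof
        fix e assume "e \<in> cyc_edges ys"
        then obtain i where i: "i < m" "e = dedge (W i)" unfolding cys by blast
        then have "length (W i) = n" using WS by blast
        then show "e \<in> D_edges n" using i unfolding D_edges_iff by blast
      qed
    qed
    obtain w' where w': "subdiamond n w'" "principal_cycle n w' (cyc_edges ys)" using IH ysc by blast
    have lw': "length w' \<le> n" using w'(1) by (simp add: subdiamond_def)
    obtain q1 q2 where q: "is_path (sd_edges n w') q1" "hd q1 = sd_top w'" "last q1 = sd_bot w'"
      "sd_leftmost w' \<in> set q1" "is_path (sd_edges n w') q2" "hd q2 = sd_bot w'" "last q2 = sd_top w'"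
      "sd_rightmost w' \<in> set q2" "cyc_edges ys = path_edges q1 \<union> path_edges q2"
      using w'(2) unfolding principal_cycle_def by blast
    have ginj: "a = b \<or> (a = 0 \<and> b = m) \<or> (a = m \<and> b = 0)" if "a \<le> m" "b \<le> m" "g a = g b" for a b
    proof (rule ccontr)
      assume c: "\<not> (a = b \<or> (a = 0 \<and> b = m) \<or> (a = m \<and> b = 0))"
      show False
      proof (cases "a < b")
        case True then show False using zne[of "2*a" "2*b"] that c by (auto simp: g_def)
      next
        case False then show False using zne[of "2*b" "2*a"] that c by (auto simp: g_def)
      qed
    qed
    have Winj: "i = j" if ij: "i < m" "j < m" "W i = W j" for i j
    proof -
      have "{g i, g (Suc i)} = {g j, g (Suc j)}" using dW[OF ij(1)] dW[OF ij(2)] ij(3) by (simp add: g_def)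
      then have "(g i = g j \<and> g (Suc i) = g (Suc j)) \<or> (g i = g (Suc j) \<and> g (Suc i) = g j)"
        by (auto simp: doubleton_eq_iff)
      then show ?thesis
      proof
        assume "g i = g j \<and> g (Suc i) = g (Suc j)"
        then show ?thesis using ginj[of i j] ij by simp
      next
        assume h: "g i = g (Suc j) \<and> g (Suc i) = g j"
        have A: "i = Suc j \<or> (i = 0 \<and> Suc j = m) \<or> (i = m \<and> Suc j = 0)" using ginj[of i "Suc j"] ij h by simp
        have B: "Suc i = j \<or> (Suc i = 0 \<and> j = m) \<or> (Suc i = m \<and> j = 0)" using ginj[of "Suc i" j] ij h by simp
        show ?thesis using A B m3 ij(1,2) by linarith
      qed
    qed
    define \<sigma> where "\<sigma> w = S (THE i. i < m \<and> W i = w)" for w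
    have sW: "\<sigma> (W i) = S i" if "i < m" for i
    proof -
      have "(THE j. j < m \<and> W j = W i) = i" using that Winj by (intro the_equality) auto
      then show ?thesis by (simp add: \<sigma>_def)
    qed
    have Cx2: "cyc_edges xs = (\<Union>i<m. Qe (W i) (\<sigma> (W i)))" using Cx sW by simp
    have Wset: "{w. length w = n \<and> dedge w \<in> cyc_edges ys} = W ` {..<m}"
    proof (rule set_eqI)
      fix w show "w \<in> {w. length w = n \<and> dedge w \<in> cyc_edges ys} \<longleftrightarrow> w \<in> W ` {..<m}"
      proof
        assume "w \<in> {w. length w = n \<and> dedge w \<in> cyc_edges ys}"
        then obtain i where i: "i < m" "dedge w = dedge (W i)" "length w = n" unfolding cys by blast
        then have "w = W i" using WS by (intro dedge_inj) auto
        then show "w \<in> W ` {..<m}" using i by blast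
      next
        assume "w \<in> W ` {..<m}"
        then obtain i where i: "i < m" "w = W i" by blast
        then show "w \<in> {w. length w = n \<and> dedge w \<in> cyc_edges ys}" unfolding cys using WS by blast
      qed
    qed
    note L1 = lift_path[OF q(1), of \<sigma>]
    note L2 = lift_path[OF q(5), of \<sigma>]
    let ?p1 = "lift (fm n \<sigma>) q1" and ?p2 = "lift (fm n \<sigma>) q2"
    have q1ne: "q1 \<noteq> []" using q(1) unfolding is_path_def walk_eq by blast
    have q2ne: "q2 \<noteq> []" using q(5) unfolding is_path_def walk_eq by blast
    have e1: "path_edges ?p1 = (\<Union>w\<in>{w. length w = n \<and> dedge w \<in> path_edges q1}. Qe w (\<sigma> w))"
      by (rule conjunct2[OF L1])
    have e2: "path_edges ?p2 = (\<Union>w\<in>{w. length w = n \<and> dedge w \<in> path_edges q2}. Qe w (\<sigma> w))"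
      by (rule conjunct2[OF L2])
    have "path_edges ?p1 \<union> path_edges ?p2 =
       (\<Union>w\<in>{w. length w = n \<and> dedge w \<in> path_edges q1} \<union> {w. length w = n \<and> dedge w \<in> path_edges q2}. Qe w (\<sigma> w))"
      unfolding e1 e2 UN_Un ..
    also have "{w. length w = n \<and> dedge w \<in> path_edges q1} \<union> {w. length w = n \<and> dedge w \<in> path_edges q2}
       = {w. length w = n \<and> dedge w \<in> cyc_edges ys}" unfolding q(9) by (rule set_eqI) auto
    also have "\<dots> = W ` {..<m}" by (rule Wset)
    also have "(\<Union>w\<in>W ` {..<m}. Qe w (\<sigma> w)) = cyc_edges xs" using Cx2 by simp
    finally have Ceq: "cyc_edges xs = path_edges ?p1 \<union> path_edges ?p2" by simp
    have "principal_cycle (Suc n) w' (cyc_edges xs)"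
      unfolding principal_cycle_def
    proof (intro conjI exI)
      show "subdiamond (Suc n) w'" using lw' by (simp add: subdiamond_def)
      show "is_cycle (D_edges (Suc n)) xs" by (rule cyc)
      show "cyc_edges xs = cyc_edges xs" ..
      show "is_path (sd_edges (Suc n) w') ?p1" by (rule conjunct1[OF L1])
      show "is_path (sd_edges (Suc n) w') ?p2" by (rule conjunct1[OF L2])
      show "hd ?p1 = sd_top w'" using lift_hd[OF q1ne] q(2) by simp
      show "last ?p1 = sd_bot w'" using lift_last[OF q1ne] q(3) by simp
      show "hd ?p2 = sd_bot w'" using lift_hd[OF q2ne] q(6) by simp
      show "last ?p2 = sd_top w'" using lift_last[OF q2ne] q(7) by simp
      show "sd_leftmost w' \<in> set ?p1" by (rule subsetD[OF lift_set q(4)])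
      show "sd_rightmost w' \<in> set ?p2" by (rule subsetD[OF lift_set q(8)])
      show "cyc_edges xs = path_edges ?p1 \<union> path_edges ?p2" by (rule Ceq)
    qed
    moreover have "subdiamond (Suc n) w'" using lw' by (simp add: subdiamond_def)
    ultimately show ?thesis by blast
  qed
qed


lemma D0: "D_edges 0 = {dedge []}"
  by (auto simp: D_edges_def)

lemma part1: "\<forall>xs. is_cycle (D_edges n) xs \<longrightarrow> (\<exists>w. subdiamond n w \<and> principal_cycle n w (cyc_edges xs))"
proof (induction n)
  case 0
  show ?case
  proof (intro allI impI)
    fix xs assume c: "is_cycle (D_edges 0) xs"
    have L3: "3 \<le> length xs" and d: "distinct xs" and cE: "cyc_edges xs \<subseteq> D_edges 0"
      using c by (auto simp: cycle_eq)
    have "path_edges xs \<subseteq> D_edges 0" using cE unfolding cyc_edges_def by blast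
    moreover have "xs \<noteq> []" using L3 by auto
    ultimately have wk: "is_walk (D_edges 0) xs" unfolding walk_eq by blast
    have "set xs \<subseteq> dedge []"
    proof
      fix x assume "x \<in> set xs"
      then obtain e where "e \<in> D_edges 0" "x \<in> e" using walk_set_edge[OF wk] L3 by fastforce
      then show "x \<in> dedge []" unfolding D0 by simp
    qed
    then have "card (set xs) \<le> card (dedge [])" by (intro card_mono) simp_all
    also have "\<dots> \<le> 2" unfolding dedge_def by (rule card_le2)
    finally have "length xs \<le> 2" using distinct_card[OF d] by simp
    then show "\<exists>w. subdiamond 0 w \<and> principal_cycle 0 w (cyc_edges xs)" using L3 by simp
  qed
next
  case (Suc n)
  show ?case
  proof (intro allI impI)
    fix xs assume c: "is_cycle (D_edges (Suc n)) xs"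
    show "\<exists>w. subdiamond (Suc n) w \<and> principal_cycle (Suc n) w (cyc_edges xs)"
    proof (cases "vin n (hd xs)")
      case True then show ?thesis by (rule cycle_step[OF Suc.IH c])
    next
      case False
      have R: "is_cycle (D_edges (Suc n)) (rotate1 xs) \<and> cyc_edges (rotate1 xs) = cyc_edges xs \<and> hd (rotate1 xs) = xs ! 1"
        by (rule rot[OF c])
      have L3: "3 \<le> length xs" and cE: "cyc_edges xs \<subseteq> D_edges (Suc n)" using c by (auto simp: cycle_eq)
      have "{xs ! 0, xs ! Suc 0} \<in> path_edges xs" using L3 by (intro path_edgesI) simp
      then have "{xs ! 0, xs ! Suc 0} \<in> D_edges (Suc n)" using cE unfolding cyc_edges_def by blast
      then have "vin n (xs ! 0) \<longleftrightarrow> \<not> vin n (xs ! Suc 0)" by (rule edge_vin)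
      moreover have "xs \<noteq> []" using L3 by auto
      then have "hd xs = xs ! 0" by (rule hd_conv_nth)
      ultimately have "vin n (hd (rotate1 xs))" using False R by simp
      then have "\<exists>w. subdiamond (Suc n) w \<and> principal_cycle (Suc n) w (cyc_edges (rotate1 xs))"
        using cycle_step[OF Suc.IH conjunct1[OF R]] by blast
      then show ?thesis using R by simp
    qed
  qed
qed

theorem lemma2p3:
  fixes n :: nat
  shows "(\<forall>xs. is_cycle (D_edges n) xs \<longrightarrow>
            (\<exists>w. subdiamond n w \<and> principal_cycle n w (cyc_edges xs)))
       \<and> (\<forall>w t C. subdiamond n w \<and> height n w = 2 ^ t \<and> principal_cycle n w C
            \<longrightarrow> card C = 2 ^ (t + 1))"
  using part1[of n] part2 by blast


end
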